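(* Let $\mathfrak{A}[\tau]$ be a semi-associative topological partial *-algebra with multiplication core $\mathfrak{B}$ and unit $e\in\mathfrak{B}$, and let $\mathcal{M}\subseteq\mathcal{P}_{\mathfrak{B}}(\mathfrak{A})$ be sufficient. Take $\mathfrak{K}=\mathfrak{A}^+_{\mathcal{M}}$. Then $\|x\|_b:=\inf\{\gamma>0:-\gamma e\le x\le\gamma e\}$ is a norm on the real vector space $(\mathfrak{A}_b(\mathcal{M}))_h$ of hermitian $\mathfrak{K}$-bounded elements.
   Context: A partial *-algebra is a complex vector space $\mathfrak{A}$ with conjugate-linear involution and distributive partial multiplication on $\Gamma\subset\mathfrak{A}\times\mathfrak{A}$ with $(x,y)\in\Gamma$ iff $(y^*,x^* )\in\Gamma$, then $(xy)^*=y^*x^*$; $L(y)=\{x:(x,y)\in\Gamma\}$, $R(x)=\{y:(x,y)\in\Gamma\}$; $R\mathfrak{A}$, $L\mathfrak{A}$ universal right/left multipliers; unit $e=e^*\in R\mathfrak{A}\cap L\mathfrak{A}$ with $xe=ex=x$. Semi-associative: $y\in R(x)$ implies $yz\in R(x)$ and $(xy)z=x(yz)$ for $z\in R\mathfrak{A}$. Topological partial *-algebra: Hausdorff locally convex topology $\tau$ such that each map $y\in R(x)\mapsto xy$ is closed. $\tau^*$: seminorms $\max\{p(x),p(x^* )\}$. A multiplication core is a subspace $\mathfrak{B}\subseteq R\mathfrak{A}$ with: $e\in\mathfrak{B}$ if a unit exists; $\mathfrak{B}\mathfrak{B}\subseteq\mathfrak{B}$; $\mathfrak{B}$ $\tau^*$-dense;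 $x\mapsto xb$ $\tau$-continuous for $b\in\mathfrak{B}$; $b^*(xc)=(b^*x)c$. An ips-form with core $\mathfrak{B}$ is a positive sesquilinear form $\varphi$ on $\mathfrak{A}\times\mathfrak{A}$ with $\mathfrak{B}\subset R\mathfrak{A}$, $\{x+N_\varphi:x\in\mathfrak{B}\}$ dense in the completion of $\mathfrak{A}/N_\varphi$ ($N_\varphi=\{x:\varphi(x,x)=0\}$), $\varphi(xa,b)=\varphi(a,x^*b)$ and $\varphi(x^*a,yb)=\varphi(a,(xy)b)$ for $x\in L(y)$, $a,b\in\mathfrak{B}$. $\mathcal{P}_{\mathfrak{B}}(\mathfrak{A})$: such forms that are $\tau$-continuous. $\mathcal{M}$ is sufficient if $\varphi(x,x)=0$ for all $\varphi\in\mathcal{M}$ implies $x=0$. $\mathfrak{A}^+_{\mathcal{M}}=\{x:\varphi(xa,a)\ge0\ \forall\varphi\in\mathcal{M},a\in\mathfrak{B}\}$; it defines the order $x\le y\iff y-x\in\mathfrak{A}^+_{\mathcal{M}}$ on $\mathfrak{A}_h=\{x:x=x^*\}$. With $\Re(x)=\frac12(x+x^* )$, $\Im(x)=\frac1{2i}(x-x^* )$, an element $x$ is $\mathfrak{K}$-bounded if there is $\gamma\ge0$ with $\pm\Re(x)\le\gamma e$ and $\pm\Im(x)\le\gamma e$; $\mathfrak{A}_b(\mathcal{M})$ denotes the set of such elements for $\mathfrak{K}=\mathfrak{A}^+_{\mathcal{M}}$ and $(\mathfrak{A}_b(\mathcal{M}))_h$ its hermitian part. *)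

theory Defs
  imports "HOL-Analysis.Analysis"
begin

text \<open>
  A partial *-algebra on a complex vector space of type 'a is given by
  an involution invol, a set Gam of composable pairs and a multiplication mul
  (only meaningful on Gam).  The Hausdorff locally convex topology tau is
  given by a (separating) family P of seminorms generating it.
\<close>

definition L_set :: "('a \<times> 'a) set \<Rightarrow> 'a \<Rightarrow> 'a set" where
  "L_set Gam y = {x. (x, y) \<in> Gam}"

definition R_set :: "('a \<times> 'a) set \<Rightarrow> 'a \<Rightarrow> 'a set" where
  "R_set Gam x = {y. (x, y) \<in> Gam}"

definition RA :: "('a \<times> 'a) set \<Rightarrow> 'a set" where
  "RA Gam = {y. \<forall>x. (x, y) \<in> Gam}"

definition LA :: "('a \<times> 'a) set \<Rightarrow> 'a set" where
  "LA Gam = {x. \<forall>y. (x, y) \<in> Gam}"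

definition partial_star_algebra ::
  "(complex \<Rightarrow> 'a::ab_group_add \<Rightarrow> 'a) \<Rightarrow> ('a \<Rightarrow> 'a) \<Rightarrow> ('a \<times> 'a) set \<Rightarrow> ('a \<Rightarrow> 'a \<Rightarrow> 'a) \<Rightarrow> bool" where
  "partial_star_algebra sc invol Gam mul \<longleftrightarrow>
     vector_space sc \<and>
     (\<forall>x y. invol (x + y) = invol x + invol y) \<and>
     (\<forall>c x. invol (sc c x) = sc (cnj c) (invol x)) \<and>
     (\<forall>x. invol (invol x) = x) \<and>
     (\<forall>x y. (x, y) \<in> Gam \<longleftrightarrow> (invol y, invol x) \<in> Gam) \<and>
     (\<forall>x y. (x, y) \<in> Gam \<longrightarrow> invol (mul x y) = mul (invol y) (invol x)) \<and>
     (\<forall>x y z a b. (x, y) \<in> Gam \<and> (x, z) \<in> Gam \<longrightarrow>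
         (x, sc a y + sc b z) \<in> Gam \<and>
         mul x (sc a y + sc b z) = sc a (mul x y) + sc b (mul x z)) \<and>
     (\<forall>x y z a b. (x, z) \<in> Gam \<and> (y, z) \<in> Gam \<longrightarrow>
         (sc a x + sc b y, z) \<in> Gam \<and>
         mul (sc a x + sc b y) z = sc a (mul x z) + sc b (mul y z))"

definition is_unit_elem ::
  "('a::ab_group_add \<Rightarrow> 'a) \<Rightarrow> ('a \<times> 'a) set \<Rightarrow> ('a \<Rightarrow> 'a \<Rightarrow> 'a) \<Rightarrow> 'a \<Rightarrow> bool" where
  "is_unit_elem invol Gam mul e \<longleftrightarrow> e = invol e \<and> e \<in> RA Gam \<inter> LA Gam \<and>
     (\<forall>x. mul x e = x \<and> mul e x = x)"

definition semi_associative ::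
  "('a \<times> 'a) set \<Rightarrow> ('a \<Rightarrow> 'a \<Rightarrow> 'a) \<Rightarrow> bool" where
  "semi_associative Gam mul \<longleftrightarrow>
     (\<forall>x y z. y \<in> R_set Gam x \<and> z \<in> RA Gam \<longrightarrow>
        mul y z \<in> R_set Gam x \<and> mul (mul x y) z = mul x (mul y z))"

definition seminorm :: "(complex \<Rightarrow> 'a::ab_group_add \<Rightarrow> 'a) \<Rightarrow> ('a \<Rightarrow> real) \<Rightarrow> bool" where
  "seminorm sc p \<longleftrightarrow> (\<forall>x y. p (x + y) \<le> p x + p y) \<and> (\<forall>c x. p (sc c x) = norm c * p x)"

definition hausdorff_lc_seminorms :: "(complex \<Rightarrow> 'a::ab_group_add \<Rightarrow> 'a) \<Rightarrow> ('a \<Rightarrow> real) set \<Rightarrow> bool" where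
  "hausdorff_lc_seminorms sc P \<longleftrightarrow> (\<forall>p\<in>P. seminorm sc p) \<and> (\<forall>x. x \<noteq> 0 \<longrightarrow> (\<exists>p\<in>P. p x \<noteq> 0))"

definition near :: "('a::ab_group_add \<Rightarrow> real) set \<Rightarrow> real \<Rightarrow> 'a \<Rightarrow> 'a \<Rightarrow> bool" where
  "near F eps x y \<longleftrightarrow> (\<forall>p\<in>F. p (y - x) < eps)"

definition tau_continuous :: "('a::ab_group_add \<Rightarrow> real) set \<Rightarrow> ('a \<Rightarrow> 'a) \<Rightarrow> bool" where
  "tau_continuous P f \<longleftrightarrow> (\<forall>x. \<forall>p\<in>P. \<forall>eps>0. \<exists>F delta. finite F \<and> F \<subseteq> P \<and> delta > 0 \<and>
      (\<forall>y. near F delta x y \<longrightarrow> p (f y - f x) < eps))"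

definition tau_continuous2 :: "('a::ab_group_add \<Rightarrow> real) set \<Rightarrow> ('a \<Rightarrow> 'a \<Rightarrow> complex) \<Rightarrow> bool" where
  "tau_continuous2 P f \<longleftrightarrow> (\<forall>x y. \<forall>eps>0. \<exists>F delta. finite F \<and> F \<subseteq> P \<and> delta > 0 \<and>
      (\<forall>x' y'. near F delta x x' \<and> near F delta y y' \<longrightarrow> norm (f x' y' - f x y) < eps))"

text \<open>Topological partial *-algebra: each map y in R(x) |-> xy is closed, i.e.
  its graph is closed in A[tau] x A[tau] (expressed through basic neighbourhoods).\<close>
definition mult_closed :: "('a::ab_group_add \<Rightarrow> real) set \<Rightarrow> ('a \<times> 'a) set \<Rightarrow> ('a \<Rightarrow> 'a \<Rightarrow> 'a) \<Rightarrow> bool" where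
  "mult_closed P Gam mul \<longleftrightarrow> (\<forall>x y z.
      (\<forall>F eps. finite F \<and> F \<subseteq> P \<and> eps > 0 \<longrightarrow>
         (\<exists>y'\<in>R_set Gam x. near F eps y y' \<and> near F eps z (mul x y'))) \<longrightarrow>
      y \<in> R_set Gam x \<and> z = mul x y)"

definition topological_partial_star_algebra ::
  "(complex \<Rightarrow> 'a::ab_group_add \<Rightarrow> 'a) \<Rightarrow> ('a \<Rightarrow> 'a) \<Rightarrow> ('a \<times> 'a) set \<Rightarrow> ('a \<Rightarrow> 'a \<Rightarrow> 'a) \<Rightarrow> ('a \<Rightarrow> real) set \<Rightarrow> bool" where
  "topological_partial_star_algebra sc invol Gam mul P \<longleftrightarrow>
     partial_star_algebra sc invol Gam mul \<and> hausdorff_lc_seminorms sc P \<and> mult_closed P Gam mul"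

text \<open>tau*-density: tau* is generated by the seminorms x |-> max (p x) (p (invol x)).\<close>
definition tau_star_dense ::
  "(complex \<Rightarrow> 'a::ab_group_add \<Rightarrow> 'a) \<Rightarrow> ('a \<Rightarrow> 'a) \<Rightarrow> ('a \<Rightarrow> real) set \<Rightarrow> 'a set \<Rightarrow> bool" where
  "tau_star_dense sc invol P B \<longleftrightarrow> (\<forall>x F eps. finite F \<and> F \<subseteq> P \<and> eps > 0 \<longrightarrow>
      (\<exists>b\<in>B. \<forall>p\<in>F. max (p (b - x)) (p (invol (b - x))) < eps))"

definition multiplication_core ::
  "(complex \<Rightarrow> 'a::ab_group_add \<Rightarrow> 'a) \<Rightarrow> ('a \<Rightarrow> 'a) \<Rightarrow> ('a \<times> 'a) set \<Rightarrow> ('a \<Rightarrow> 'a \<Rightarrow> 'a) \<Rightarrow> ('a \<Rightarrow> real) set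
     \<Rightarrow> 'a \<Rightarrow> 'a set \<Rightarrow> bool" where
  "multiplication_core sc invol Gam mul P e B \<longleftrightarrow>
     module.subspace sc B \<and> B \<subseteq> RA Gam \<and> e \<in> B \<and>
     (\<forall>b\<in>B. \<forall>c\<in>B. mul b c \<in> B) \<and>
     tau_star_dense sc invol P B \<and>
     (\<forall>b\<in>B. tau_continuous P (\<lambda>x. mul x b)) \<and>
     (\<forall>b\<in>B. \<forall>c\<in>B. \<forall>x. mul (invol b) (mul x c) = mul (mul (invol b) x) c)"

definition positive_sesquilinear :: "(complex \<Rightarrow> 'a::ab_group_add \<Rightarrow> 'a) \<Rightarrow> ('a \<Rightarrow> 'a \<Rightarrow> complex) \<Rightarrow> bool" where
  "positive_sesquilinear sc phi \<longleftrightarrow>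
     (\<forall>x y z. phi (x + y) z = phi x z + phi y z) \<and>
     (\<forall>x y z. phi x (y + z) = phi x y + phi x z) \<and>
     (\<forall>c x y. phi (sc c x) y = c * phi x y) \<and>
     (\<forall>c x y. phi x (sc c y) = cnj c * phi x y) \<and>
     (\<forall>x. Im (phi x x) = 0 \<and> Re (phi x x) \<ge> 0)"

text \<open>ips-form with core B.  Density of {x + N_phi : x in B} in the completion of
  A/N_phi is written out: every x is approximated by elements of B in the
  seminorm x |-> sqrt (phi x x).\<close>
definition ips_form ::
  "(complex \<Rightarrow> 'a::ab_group_add \<Rightarrow> 'a) \<Rightarrow> ('a \<Rightarrow> 'a) \<Rightarrow> ('a \<times> 'a) set \<Rightarrow> ('a \<Rightarrow> 'a \<Rightarrow> 'a) \<Rightarrow> 'a set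
     \<Rightarrow> ('a \<Rightarrow> 'a \<Rightarrow> complex) \<Rightarrow> bool" where
  "ips_form sc invol Gam mul B phi \<longleftrightarrow>
     positive_sesquilinear sc phi \<and> B \<subseteq> RA Gam \<and>
     (\<forall>x eps. eps > 0 \<longrightarrow> (\<exists>b\<in>B. Re (phi (x - b) (x - b)) < eps)) \<and>
     (\<forall>x. \<forall>a\<in>B. \<forall>b\<in>B. phi (mul x a) b = phi a (mul (invol x) b)) \<and>
     (\<forall>x y. \<forall>a\<in>B. \<forall>b\<in>B. x \<in> L_set Gam y \<longrightarrow>
         phi (mul (invol x) a) (mul y b) = phi a (mul (mul x y) b))"

definition P_B ::
  "(complex \<Rightarrow> 'a::ab_group_add \<Rightarrow> 'a) \<Rightarrow> ('a \<Rightarrow> 'a) \<Rightarrow> ('a \<times> 'a) set \<Rightarrow> ('a \<Rightarrow> 'a \<Rightarrow> 'a) \<Rightarrow> ('a \<Rightarrow> real) set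
     \<Rightarrow> 'a set \<Rightarrow> ('a \<Rightarrow> 'a \<Rightarrow> complex) set" where
  "P_B sc invol Gam mul P B = {phi. ips_form sc invol Gam mul B phi \<and> tau_continuous2 P phi}"

definition sufficient :: "('a::zero \<Rightarrow> 'a \<Rightarrow> complex) set \<Rightarrow> bool" where
  "sufficient M \<longleftrightarrow> (\<forall>x. (\<forall>phi\<in>M. phi x x = 0) \<longrightarrow> x = 0)"

definition pos_cone ::
  "('a \<Rightarrow> 'a \<Rightarrow> 'a) \<Rightarrow> 'a set \<Rightarrow> ('a \<Rightarrow> 'a \<Rightarrow> complex) set \<Rightarrow> 'a set" where
  "pos_cone mul B M = {x. \<forall>phi\<in>M. \<forall>a\<in>B. Im (phi (mul x a) a) = 0 \<and> Re (phi (mul x a) a) \<ge> 0}"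

definition K_le :: "'a::ab_group_add set \<Rightarrow> 'a \<Rightarrow> 'a \<Rightarrow> bool" where
  "K_le K x y \<longleftrightarrow> y - x \<in> K"

definition Re_part :: "(complex \<Rightarrow> 'a::ab_group_add \<Rightarrow> 'a) \<Rightarrow> ('a \<Rightarrow> 'a) \<Rightarrow> 'a \<Rightarrow> 'a" where
  "Re_part sc invol x = sc (1/2) (x + invol x)"

definition Im_part :: "(complex \<Rightarrow> 'a::ab_group_add \<Rightarrow> 'a) \<Rightarrow> ('a \<Rightarrow> 'a) \<Rightarrow> 'a \<Rightarrow> 'a" where
  "Im_part sc invol x = sc (1 / (2 * \<i>)) (x - invol x)"

definition K_bounded :: "(complex \<Rightarrow> 'a::ab_group_add \<Rightarrow> 'a) \<Rightarrow> ('a \<Rightarrow> 'a) \<Rightarrow> 'a set \<Rightarrow> 'a \<Rightarrow> 'a \<Rightarrow> bool" where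
  "K_bounded sc invol K e x \<longleftrightarrow> (\<exists>\<gamma>::real. \<gamma> \<ge> 0 \<and>
      K_le K (Re_part sc invol x) (sc (complex_of_real \<gamma>) e) \<and> K_le K (- Re_part sc invol x) (sc (complex_of_real \<gamma>) e) \<and>
      K_le K (Im_part sc invol x) (sc (complex_of_real \<gamma>) e) \<and> K_le K (- Im_part sc invol x) (sc (complex_of_real \<gamma>) e))"

definition Ab_h :: "(complex \<Rightarrow> 'a::ab_group_add \<Rightarrow> 'a) \<Rightarrow> ('a \<Rightarrow> 'a) \<Rightarrow> 'a set \<Rightarrow> 'a \<Rightarrow> 'a set" where
  "Ab_h sc invol K e = {x. K_bounded sc invol K e x \<and> invol x = x}"

definition norm_b :: "(complex \<Rightarrow> 'a::ab_group_add \<Rightarrow> 'a) \<Rightarrow> 'a set \<Rightarrow> 'a \<Rightarrow> 'a \<Rightarrow> real" where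
  "norm_b sc K e x = Inf {\<gamma>::real. \<gamma> > 0 \<and> K_le K (- (sc (complex_of_real \<gamma>) e)) x \<and> K_le K x (sc (complex_of_real \<gamma>) e)}"

definition is_norm_on :: "(complex \<Rightarrow> 'a::ab_group_add \<Rightarrow> 'a) \<Rightarrow> 'a set \<Rightarrow> ('a \<Rightarrow> real) \<Rightarrow> bool" where
  "is_norm_on sc V N \<longleftrightarrow> module.subspace (\<lambda>r. sc (complex_of_real r)) V \<and>
     (\<forall>x\<in>V. N x \<ge> 0) \<and> (\<forall>x\<in>V. N x = 0 \<longleftrightarrow> x = 0) \<and>
     (\<forall>c. \<forall>x\<in>V. N (sc (complex_of_real c) x) = \<bar>c\<bar> * N x) \<and>
     (\<forall>x\<in>V. \<forall>y\<in>V. N (x + y) \<le> N x + N y)"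

end

theory Submission
  imports Defs
begin

locale L519 =
  fixes sc :: "complex \<Rightarrow> 'a::ab_group_add \<Rightarrow> 'a"
    and invol :: "'a \<Rightarrow> 'a"
    and Gam :: "('a \<times> 'a) set"
    and mul :: "'a \<Rightarrow> 'a \<Rightarrow> 'a"
    and B :: "'a set"
    and e :: 'a
    and M :: "('a \<Rightarrow> 'a \<Rightarrow> complex) set"
  assumes vs: "vector_space sc"
    and inv_add: "\<And>x y. invol (x + y) = invol x + invol y"
    and inv_sc: "\<And>c x. invol (sc c x) = sc (cnj c) (invol x)"
    and lin1: "\<And>x y z a b. (x, z) \<in> Gam \<Longrightarrow> (y, z) \<in> Gam \<Longrightarrow>
         mul (sc a x + sc b y) z = sc a (mul x z) + sc b (mul y z)"
    and lin2: "\<And>x y z a b. (x, y) \<in> Gam \<Longrightarrow> (x, z) \<in> Gam \<Longrightarrow>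
         mul x (sc a y + sc b z) = sc a (mul x y) + sc b (mul x z)"
    and BRA: "B \<subseteq> RA Gam"
    and eB: "e \<in> B"
    and Bsub: "module.subspace sc B"
    and unitr: "\<And>x. mul x e = x"
    and unitl: "\<And>x. mul e x = x"
    and Mps: "\<And>phi. phi \<in> M \<Longrightarrow> positive_sesquilinear sc phi"
    and Mdense: "\<And>phi x eps. phi \<in> M \<Longrightarrow> eps > 0 \<Longrightarrow> (\<exists>b\<in>B. Re (phi (x - b) (x - b)) < eps)"
    and Mips: "\<And>phi x a b. phi \<in> M \<Longrightarrow> a \<in> B \<Longrightarrow> b \<in> B \<Longrightarrow> phi (mul x a) b = phi a (mul (invol x) b)"
    and suff: "sufficient M"
begin

interpretation V: vector_space sc by (rule vs)

lemma module_B: "module sc" by (rule V.module_axioms)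

lemma B_add: "a \<in> B \<Longrightarrow> b \<in> B \<Longrightarrow> a + b \<in> B"
  using Bsub module_B by (simp add: module.subspace_def)
lemma B_sc: "a \<in> B \<Longrightarrow> sc c a \<in> B"
  using Bsub module_B by (simp add: module.subspace_def)

lemma inGam: "b \<in> B \<Longrightarrow> (x, b) \<in> Gam"
  using BRA by (auto simp: RA_def)

lemma mul_add1: "c \<in> B \<Longrightarrow> mul (x + y) c = mul x c + mul y c"
  using lin1[of x c y 1 1] inGam by simp
lemma mul_sc1: "c \<in> B \<Longrightarrow> mul (sc a x) c = sc a (mul x c)"
  using lin1[of x c x a 0] inGam by simp
lemma mul_add2: "a \<in> B \<Longrightarrow> b \<in> B \<Longrightarrow> mul x (a + b) = mul x a + mul x b"
  using lin2[of x a b 1 1] inGam by simp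
lemma mul_sc2: "a \<in> B \<Longrightarrow> mul x (sc c a) = sc c (mul x a)"
  using lin2[of x a a c 0] inGam by simp
lemma mul_neg1: "c \<in> B \<Longrightarrow> mul (- x) c = - mul x c"
  using mul_sc1[of c "-1" x] by (simp add: V.scale_minus_left)
lemma mul_diff1: "c \<in> B \<Longrightarrow> mul (x - y) c = mul x c - mul y c"
  using mul_add1[of c x "-y"] mul_neg1[of c y] by simp

context fixes phi assumes ph: "phi \<in> M" begin
lemma ph_add1: "phi (x + y) z = phi x z + phi y z" using Mps[OF ph] by (simp add: positive_sesquilinear_def)
lemma ph_add2: "phi x (y + z) = phi x y + phi x z" using Mps[OF ph] by (simp add: positive_sesquilinear_def)
lemma ph_sc1: "phi (sc c x) y = c * phi x y" using Mps[OF ph] by (simp add: positive_sesquilinear_def)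
lemma ph_sc2: "phi x (sc c y) = cnj c * phi x y" using Mps[OF ph] by (simp add: positive_sesquilinear_def)
lemma ph_pos: "Im (phi x x) = 0" "Re (phi x x) \<ge> 0" using Mps[OF ph] by (simp_all add: positive_sesquilinear_def)
lemma ph_diff1: "phi (x - y) z = phi x z - phi y z"
  using ph_add1[of "x - y" y z] by simp
lemma ph_diff2: "phi x (y - z) = phi x y - phi x z"
  using ph_add2[of x "y - z" z] by simp
end

definition K where "K = pos_cone mul B M"

lemma K_iff: "x \<in> K \<longleftrightarrow> (\<forall>phi\<in>M. \<forall>a\<in>B. Im (phi (mul x a) a) = 0 \<and> Re (phi (mul x a) a) \<ge> 0)"
  by (simp add: K_def pos_cone_def)

lemma K_add: "x \<in> K \<Longrightarrow> y \<in> K \<Longrightarrow> x + y \<in> K"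
  by (simp add: K_iff mul_add1 ph_add1)

lemma K_sc: "x \<in> K \<Longrightarrow> r \<ge> 0 \<Longrightarrow> sc (complex_of_real r) x \<in> K"
  by (simp add: K_iff mul_sc1 ph_sc1)

lemma e_K: "e \<in> K"
  by (simp add: K_iff unitl ph_pos)

lemma eK: "r \<ge> 0 \<Longrightarrow> sc (complex_of_real r) e \<in> K"
  using K_sc e_K by blast

lemma K_zero: "0 \<in> K"
  using eK[of 0] by simp


lemma K_le_iff: "K_le K x y \<longleftrightarrow> y - x \<in> K" by (simp add: K_le_def)

lemma sc_half: "sc (1/2) x + sc (1/2) x = x"
proof -
  have "sc (1/2) x + sc (1/2) x = sc (1/2 + 1/2) x" by (simp only: V.scale_left_distrib)
  also have "\<dots> = x" by simp
  finally show ?thesis .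
qed

lemma Re_herm: "invol x = x \<Longrightarrow> Re_part sc invol x = x"
  by (simp add: Re_part_def V.scale_right_distrib sc_half)
lemma Im_herm: "invol x = x \<Longrightarrow> Im_part sc invol x = 0"
  by (simp add: Im_part_def)

definition H where "H = Ab_h sc invol K e"
definition S where "S x = {\<gamma>::real. \<gamma> > 0 \<and> x + sc (complex_of_real \<gamma>) e \<in> K \<and> sc (complex_of_real \<gamma>) e - x \<in> K}"
definition N where "N = norm_b sc K e"

lemma N_S: "N x = Inf (S x)"
  by (simp add: N_def norm_b_def S_def K_le_iff)

lemma H_iff: "x \<in> H \<longleftrightarrow> invol x = x \<and> (\<exists>\<gamma>::real. \<gamma> \<ge> 0 \<and> sc (complex_of_real \<gamma>) e - x \<in> K \<and> sc (complex_of_real \<gamma>) e + x \<in> K)"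
  by (auto simp: H_def Ab_h_def K_bounded_def Re_herm Im_herm K_le_iff eK)

lemma sc_real_add: "sc (complex_of_real (a + b)) y = sc (complex_of_real a) y + sc (complex_of_real b) y"
  by (simp add: V.scale_left_distrib)

lemma S_ne: assumes "x \<in> H" shows "S x \<noteq> {}"
proof -
  from assms obtain \<gamma> where g: "\<gamma> \<ge> 0" "sc (complex_of_real \<gamma>) e - x \<in> K" "sc (complex_of_real \<gamma>) e + x \<in> K"
    by (auto simp: H_iff)
  have "\<gamma> + 1 \<in> S x"
    unfolding S_def using K_add[OF g(2) eK[of 1]] K_add[OF g(3) eK[of 1]] g(1)
    by (simp add: sc_real_add algebra_simps)
  then show ?thesis by blast
qed

lemma S_pos: "\<gamma> \<in> S x \<Longrightarrow> \<gamma> > 0" by (simp add: S_def)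
lemma S_bdd: "bdd_below (S x)" by (auto simp: bdd_below_def S_def intro!: exI[of _ 0])

lemma N_nonneg: "x \<in> H \<Longrightarrow> N x \<ge> 0"
  unfolding N_S by (rule cInf_greatest[OF S_ne]) (auto dest: S_pos)

lemma S_zero: "S 0 = {0<..}"
  by (auto simp: S_def eK)

lemma N_zero: "N 0 = 0"
  unfolding N_S S_zero by simp

lemma S_neg: "S (- x) = S x"
  by (auto simp: S_def algebra_simps)

lemma S_mult: assumes "c > 0" "\<gamma> \<in> S x" shows "c * \<gamma> \<in> S (sc (complex_of_real c) x)"
proof -
  have g: "\<gamma> > 0" "x + sc (complex_of_real \<gamma>) e \<in> K" "sc (complex_of_real \<gamma>) e - x \<in> K"
    using assms(2) by (auto simp: S_def)
  have "sc (complex_of_real c) (x + sc (complex_of_real \<gamma>) e) \<in> K"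
    using K_sc[OF g(2)] assms(1) by simp
  moreover have "sc (complex_of_real c) (sc (complex_of_real \<gamma>) e - x) \<in> K"
    using K_sc[OF g(3)] assms(1) by simp
  ultimately show ?thesis using assms g(1)
    by (simp add: S_def V.scale_right_distrib V.scale_right_diff_distrib V.scale_scale)
qed

lemma inv0: "invol 0 = 0"
  using inv_add[of 0 0] by simp

lemma H_sc_pos: "x \<in> H \<Longrightarrow> c \<ge> 0 \<Longrightarrow> sc (complex_of_real c) x \<in> H"
proof -
  assume x: "x \<in> H" and True: "c \<ge> 0"
  then obtain \<gamma> where g: "invol x = x" "\<gamma> \<ge> 0" "sc (complex_of_real \<gamma>) e - x \<in> K" "sc (complex_of_real \<gamma>) e + x \<in> K"
    by (auto simp: H_iff)
  have inv: "invol (sc (complex_of_real c) x) = sc (complex_of_real c) x" by (simp add: inv_sc g(1))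
    have "sc (complex_of_real c) (sc (complex_of_real \<gamma>) e - x) \<in> K"
         "sc (complex_of_real c) (sc (complex_of_real \<gamma>) e + x) \<in> K"
      using K_sc[OF g(3) True] K_sc[OF g(4) True] by auto
    then show ?thesis using inv g(2) True
      by (auto simp: H_iff V.scale_right_distrib V.scale_right_diff_distrib V.scale_scale intro!: exI[of _ "c * \<gamma>"])
qed

lemma inv_neg: "invol (- x) = - invol x"
  using inv_add[of x "-x"] inv0 by (simp add: eq_neg_iff_add_eq_0 add.commute)

lemma H_neg: "x \<in> H \<Longrightarrow> - x \<in> H"
  by (auto simp: H_iff inv_neg algebra_simps)

lemma sc_neg_neg: "sc (complex_of_real c) x = sc (complex_of_real (- c)) (- x)"
  by (simp add: V.scale_minus_left V.scale_minus_right)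

lemma H_sc: "x \<in> H \<Longrightarrow> sc (complex_of_real c) x \<in> H"
proof (cases "c \<ge> 0")
  case True
  assume "x \<in> H" then show ?thesis using H_sc_pos True by blast
next
  case False
  assume "x \<in> H"
  then have "sc (complex_of_real (- c)) (- x) \<in> H" using H_sc_pos[of "-x" "-c"] H_neg False by simp
  then show ?thesis by (simp only: sc_neg_neg[symmetric])
qed

lemma H_add: "x \<in> H \<Longrightarrow> y \<in> H \<Longrightarrow> x + y \<in> H"
proof -
  assume "x \<in> H" "y \<in> H"
  then obtain \<gamma> \<delta> where g: "invol x = x" "\<gamma> \<ge> 0" "sc (complex_of_real \<gamma>) e - x \<in> K" "sc (complex_of_real \<gamma>) e + x \<in> K"
    and d: "invol y = y" "\<delta> \<ge> 0" "sc (complex_of_real \<delta>) e - y \<in> K" "sc (complex_of_real \<delta>) e + y \<in> K"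
    by (auto simp: H_iff)
  show ?thesis using K_add[OF g(3) d(3)] K_add[OF g(4) d(4)] g d
    by (auto simp: H_iff inv_add sc_real_add algebra_simps intro!: exI[of _ "\<gamma> + \<delta>"])
qed

lemma H_zero: "0 \<in> H"
  by (auto simp: H_iff inv0 K_zero intro!: exI[of _ 0])

lemma N_mult_pos: assumes x: "x \<in> H" and c: "c > 0" shows "N (sc (complex_of_real c) x) = c * N x"
proof -
  have ne: "S x \<noteq> {}" using S_ne[OF x] .
  then obtain g where "g \<in> S x" by blast
  then have ne2: "S (sc (complex_of_real c) x) \<noteq> {}" using S_mult[OF c] by blast
  have "Inf (S (sc (complex_of_real c) x)) / c \<le> Inf (S x)"
  proof (rule cInf_greatest[OF ne])
    fix \<gamma> assume "\<gamma> \<in> S x"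
    then have "Inf (S (sc (complex_of_real c) x)) \<le> c * \<gamma>"
      by (intro cInf_lower[OF S_mult[OF c] S_bdd])
    then show "Inf (S (sc (complex_of_real c) x)) / c \<le> \<gamma>" using c by (simp add: field_simps)
  qed
  then have 1: "Inf (S (sc (complex_of_real c) x)) \<le> c * Inf (S x)" using c by (simp add: field_simps)
  have "c * Inf (S x) \<le> Inf (S (sc (complex_of_real c) x))"
  proof (rule cInf_greatest[OF ne2])
    fix \<delta> assume d: "\<delta> \<in> S (sc (complex_of_real c) x)"
    have "(1/c) * \<delta> \<in> S (sc (complex_of_real (1/c)) (sc (complex_of_real c) x))"
      using S_mult[OF _ d, of "1/c"] c by simp
    also have "sc (complex_of_real (1/c)) (sc (complex_of_real c) x) = x"
      using c by (simp add: V.scale_scale)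
    finally have "Inf (S x) \<le> (1/c) * \<delta>" by (intro cInf_lower[OF _ S_bdd])
    then show "c * Inf (S x) \<le> \<delta>" using c by (simp add: field_simps)
  qed
  with 1 show ?thesis by (simp add: N_S)
qed

lemma N_neg: "N (- x) = N x" by (simp add: N_S S_neg)

lemma N_homog: assumes x: "x \<in> H" shows "N (sc (complex_of_real c) x) = \<bar>c\<bar> * N x"
proof -
  consider "c > 0" | "c = 0" | "c < 0" by linarith
  then show ?thesis
  proof cases
    case 1 then show ?thesis using N_mult_pos[OF x] by simp
  next
    case 2 then show ?thesis by (simp add: N_zero)
  next
    case 3
    have "N (sc (complex_of_real c) x) = N (sc (complex_of_real (- c)) (- x))"
      by (simp only: sc_neg_neg[symmetric])
    also have "\<dots> = - c * N (- x)" using N_mult_pos[OF H_neg[OF x], of "-c"] 3 by simp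
    finally show ?thesis using 3 by (simp add: N_neg)
  qed
qed

lemma S_add: "\<gamma> \<in> S x \<Longrightarrow> \<delta> \<in> S y \<Longrightarrow> \<gamma> + \<delta> \<in> S (x + y)"
proof -
  assume g: "\<gamma> \<in> S x" and d: "\<delta> \<in> S y"
  have a: "(x + sc (complex_of_real \<gamma>) e) + (y + sc (complex_of_real \<delta>) e) \<in> K"
    "(sc (complex_of_real \<gamma>) e - x) + (sc (complex_of_real \<delta>) e - y) \<in> K"
    using g d by (auto simp: S_def intro!: K_add)
  have "x + y + sc (complex_of_real (\<gamma> + \<delta>)) e = (x + sc (complex_of_real \<gamma>) e) + (y + sc (complex_of_real \<delta>) e)"
    "sc (complex_of_real (\<gamma> + \<delta>)) e - (x + y) = (sc (complex_of_real \<gamma>) e - x) + (sc (complex_of_real \<delta>) e - y)"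
    by (simp_all only: sc_real_add) (simp_all add: algebra_simps)
  then show ?thesis using a g d unfolding S_def mem_Collect_eq by (metis add_pos_pos)
qed

lemma N_triangle: assumes x: "x \<in> H" and y: "y \<in> H" shows "N (x + y) \<le> N x + N y"
proof -
  have "N (x + y) - N x \<le> Inf (S y)"
  proof (rule cInf_greatest[OF S_ne[OF y]])
    fix \<delta> assume d: "\<delta> \<in> S y"
    have "N (x + y) - \<delta> \<le> Inf (S x)"
    proof (rule cInf_greatest[OF S_ne[OF x]])
      fix \<gamma> assume "\<gamma> \<in> S x"
      then have "N (x + y) \<le> \<gamma> + \<delta>" unfolding N_S using d by (intro cInf_lower[OF S_add S_bdd])
      then show "N (x + y) - \<delta> \<le> \<gamma>" by simp
    qed
    then show "N (x + y) - N x \<le> \<delta>" by (simp add: N_S)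
  qed
  then show ?thesis by (simp add: N_S)
qed

lemma N0_form: assumes x: "x \<in> H" and N0: "N x = 0" and ph: "phi \<in> M" and c: "c \<in> B"
  shows "phi (mul x c) c = 0"
proof -
  let ?u = "phi (mul x c) c" and ?q = "phi c c"
  have qim: "Im ?q = 0" and qre: "Re ?q \<ge> 0" using ph_pos[OF ph] by auto
  have key: "Im ?u = 0 \<and> \<bar>Re ?u\<bar> \<le> \<gamma> * Re ?q" if g: "\<gamma> \<in> S x" for \<gamma>
  proof -
    have k1: "x + sc (complex_of_real \<gamma>) e \<in> K" and k2: "sc (complex_of_real \<gamma>) e - x \<in> K"
      using g by (auto simp: S_def)
    have e1: "phi (mul (x + sc (complex_of_real \<gamma>) e) c) c = ?u + complex_of_real \<gamma> * ?q"
      using c ph by (simp add: mul_add1 mul_sc1 unitl ph_add1 ph_sc1)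
    have e2: "phi (mul (sc (complex_of_real \<gamma>) e - x) c) c = complex_of_real \<gamma> * ?q - ?u"
      using c ph by (simp add: mul_diff1 mul_sc1 unitl ph_diff1 ph_sc1)
    have "Im (?u + complex_of_real \<gamma> * ?q) = 0" "Re (?u + complex_of_real \<gamma> * ?q) \<ge> 0"
      using k1 ph c unfolding K_iff e1[symmetric] by auto
    moreover have "Re (complex_of_real \<gamma> * ?q - ?u) \<ge> 0"
      using k2 ph c unfolding K_iff e2[symmetric] by auto
    ultimately show ?thesis using qim by auto
  qed
  have im: "Im ?u = 0" using key S_ne[OF x] by blast
  have re: "Re ?u = 0"
  proof (cases "Re ?q = 0")
    case True
    then show ?thesis using key S_ne[OF x] by fastforce
  next
    case False
    then have qp: "Re ?q > 0" using qre by simp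
    have "\<bar>Re ?u\<bar> / Re ?q \<le> Inf (S x)"
    proof (rule cInf_greatest[OF S_ne[OF x]])
      fix \<gamma> assume "\<gamma> \<in> S x"
      then show "\<bar>Re ?u\<bar> / Re ?q \<le> \<gamma>" using key qp by (simp add: divide_le_eq)
    qed
    then have "\<bar>Re ?u\<bar> / Re ?q \<le> 0" using N0 by (simp add: N_S)
    then show ?thesis using qp by (simp add: divide_le_0_iff)
  qed
  show ?thesis using im re by (simp add: complex_eq_iff)
qed

lemma N0_zero: assumes x: "x \<in> H" and N0: "N x = 0" shows "x = 0"
proof -
  have hx: "invol x = x" using x by (simp add: H_iff)
  have "phi x x = 0" if ph: "phi \<in> M" for phi
  proof -
    have z: "phi (mul x c) c = 0" if "c \<in> B" for c using N0_form[OF x N0 ph that] .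
    have both: "phi (mul x a) e = 0 \<and> phi (mul x e) a = 0" if a: "a \<in> B" for a
    proof -
      have ae: "a + e \<in> B" using a eB by (rule B_add)
      have aie: "a + sc \<i> e \<in> B" using a eB by (intro B_add B_sc)
      have 1: "phi (mul x a) e + phi (mul x e) a = 0"
        using z[OF ae] z[OF a] z[OF eB] a eB ph by (simp add: mul_add2 ph_add1 ph_add2)
      have 2: "- \<i> * phi (mul x a) e + \<i> * phi (mul x e) a = 0"
        using z[OF aie] z[OF a] z[OF eB] a eB ph B_sc[OF eB]
        by (simp add: mul_add2 mul_sc2 ph_add1 ph_add2 ph_sc1 ph_sc2)
      have "\<i> * (phi (mul x e) a - phi (mul x a) e) = 0" using 2 by (simp add: algebra_simps)
      then have "phi (mul x e) a = phi (mul x a) e" by simp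
      with 1 show ?thesis by simp
    qed
    have pb: "phi b x = 0" and pxb: "phi x b = 0" if b: "b \<in> B" for b
    proof -
      show "phi x b = 0" using both[OF b] by (simp add: unitr)
      have "phi (mul x b) e = phi b (mul (invol x) e)" using Mips[OF ph b eB] .
      then show "phi b x = 0" using both[OF b] by (simp add: hx unitr)
    qed
    have le: "Re (phi x x) \<le> 0 + eps" if eps: "eps > 0" for eps
    proof -
      obtain b where b: "b \<in> B" "Re (phi (x - b) (x - b)) < eps" using Mdense[OF ph eps] by blast
      have "phi (x - b) (x - b) = phi x x + phi b b"
        using ph by (simp add: ph_diff1 ph_diff2 pb[OF b(1)] pxb[OF b(1)])
      then show ?thesis using b(2) ph_pos[OF ph, of b] by simp
    qed
    have "Re (phi x x) \<le> 0" by (rule field_le_epsilon[OF le])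
    then show ?thesis using ph_pos[OF ph, of x] by (simp add: complex_eq_iff)
  qed
  then show ?thesis using suff by (simp add: sufficient_def)
qed

lemma module_real: "module (\<lambda>r. sc (complex_of_real r))"
  unfolding module_def
  by (simp add: V.scale_right_distrib V.scale_left_distrib V.scale_scale)

lemma norm_main: "is_norm_on sc H N"
  unfolding is_norm_on_def module.subspace_def[OF module_real]
  using H_zero H_add H_sc N_nonneg N_zero N0_zero N_homog N_triangle by blast

end

theorem lemma5p19:
  fixes sc :: "complex \<Rightarrow> 'a::ab_group_add \<Rightarrow> 'a"
    and invol :: "'a \<Rightarrow> 'a"
    and Gam :: "('a \<times> 'a) set"
    and mul :: "'a \<Rightarrow> 'a \<Rightarrow> 'a"
    and P :: "('a \<Rightarrow> real) set"
    and B :: "'a set"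
    and e :: 'a
    and M :: "('a \<Rightarrow> 'a \<Rightarrow> complex) set"
  assumes "topological_partial_star_algebra sc invol Gam mul P"
    and "semi_associative Gam mul"
    and "is_unit_elem invol Gam mul e"
    and "multiplication_core sc invol Gam mul P e B"
    and "M \<subseteq> P_B sc invol Gam mul P B"
    and "sufficient M"
  shows "is_norm_on sc (Ab_h sc invol (pos_cone mul B M) e) (norm_b sc (pos_cone mul B M) e)"
proof -
  have psa: "partial_star_algebra sc invol Gam mul"
    using assms(1) by (simp add: topological_partial_star_algebra_def)
  interpret L519 sc invol Gam mul B e M
  proof (rule L519.intro)
    show "vector_space sc" using psa by (simp add: partial_star_algebra_def)
    show "\<And>x y. invol (x + y) = invol x + invol y" using psa by (simp add: partial_star_algebra_def)
    show "\<And>c x. invol (sc c x) = sc (cnj c) (invol x)" using psa by (simp add: partial_star_algebra_def)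
    show "\<And>x y z a b. (x, z) \<in> Gam \<Longrightarrow> (y, z) \<in> Gam \<Longrightarrow>
         mul (sc a x + sc b y) z = sc a (mul x z) + sc b (mul y z)"
      using psa unfolding partial_star_algebra_def by blast
    show "\<And>x y z a b. (x, y) \<in> Gam \<Longrightarrow> (x, z) \<in> Gam \<Longrightarrow>
         mul x (sc a y + sc b z) = sc a (mul x y) + sc b (mul x z)"
      using psa unfolding partial_star_algebra_def by blast
    show "B \<subseteq> RA Gam" "e \<in> B" "module.subspace sc B"
      using assms(4) by (simp_all add: multiplication_core_def)
    show "\<And>x. mul x e = x" "\<And>x. mul e x = x" using assms(3) by (simp_all add: is_unit_elem_def)
    show "\<And>phi. phi \<in> M \<Longrightarrow> positive_sesquilinear sc phi"
      using assms(5) by (auto simp: P_B_def ips_form_def)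
    show "\<And>phi x eps. phi \<in> M \<Longrightarrow> eps > 0 \<Longrightarrow> (\<exists>b\<in>B. Re (phi (x - b) (x - b)) < eps)"
      using assms(5) by (auto simp: P_B_def ips_form_def)
    show "\<And>phi x a b. phi \<in> M \<Longrightarrow> a \<in> B \<Longrightarrow> b \<in> B \<Longrightarrow> phi (mul x a) b = phi a (mul (invol x) b)"
      using assms(5) by (auto simp: P_B_def ips_form_def)
    show "sufficient M" by (rule assms(6))
  qed
  show ?thesis using norm_main by (simp add: H_def N_def K_def)
qed

end
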